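(* Let $g$ be a Riemannian metric, $\widehat\nabla$ its Levi-Civita connection, $\nabla$ a metric-compatible linear connection ($\nabla g=0$), and $S$ defined by $\widehat\nabla=\nabla+S$. Then $(\omega,\nabla)$ is Poisson-compatible if and only if $$(\widehat\nabla_k\omega)^{ij}+\omega^{ir}S^j{}_{rk}-\omega^{jr}S^i{}_{rk}=0\quad\text{for all }i,j,k,$$ or equivalently $$\omega^{jm}S^i{}_{mk}=\tfrac12\Big((\widehat\nabla_k\omega)^{ij}-(\widehat\nabla_r\omega)^{mj}g^{ri}g_{mk}+(\widehat\nabla_r\omega)^{im}g^{rj}g_{mk}\Big).$$
   Context: Coordinates $x^i$, summation convention. $\nabla_jdx^i=-\Gamma^i_{jk}dx^k$ and $\widehat\nabla_jdx^i=-\widehat\Gamma^i_{jk}dx^k$; $S(\xi)=\xi_pS^p{}_{nm}dx^n\otimes dx^m$ so $\widehat\Gamma^a_{bc}=\Gamma^a_{bc}-S^a{}_{bc}$. $\omega$ antisymmetric bivector; $(\omega,\nabla)$ Poisson-compatible means $d(\omega^{ij})-\omega^{kj}\nabla_k(dx^i)-\omega^{ik}\nabla_k(dx^j)=0$ for all $i,j$. *)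

theory Defs
  imports "HOL-Analysis.Analysis"
begin

text \<open>Local-coordinate setting: an open coordinate domain U in R^n (n = CARD('n)),
  coordinates x^i, i :: 'n.  Tensor fields are given by their component functions.\<close>

definition pd :: "'n::finite \<Rightarrow> (real^'n \<Rightarrow> real) \<Rightarrow> real^'n \<Rightarrow> real" where
  "pd k f x = frechet_derivative f (at x) (axis k 1)"

fun Ck :: "nat \<Rightarrow> (real^'n::finite) set \<Rightarrow> (real^'n \<Rightarrow> real) \<Rightarrow> bool" where
  "Ck 0 U f = continuous_on U f"
| "Ck (Suc m) U f = (f differentiable_on U \<and> (\<forall>k. Ck m U (pd k f)))"

definition smooth_fun :: "(real^'n::finite) set \<Rightarrow> (real^'n \<Rightarrow> real) \<Rightarrow> bool" where
  "smooth_fun U f = (\<forall>m. Ck m U f)"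

definition riemannian_metric :: "(real^'n::finite) set \<Rightarrow> ('n \<Rightarrow> 'n \<Rightarrow> real^'n \<Rightarrow> real) \<Rightarrow> bool" where
  "riemannian_metric U g =
     ((\<forall>i j. smooth_fun U (g i j)) \<and>
      (\<forall>x\<in>U. \<forall>i j. g i j x = g j i x) \<and>
      (\<forall>x\<in>U. \<forall>v::real^'n. v \<noteq> 0 \<longrightarrow> (\<Sum>i\<in>UNIV. \<Sum>j\<in>UNIV. v$i * v$j * g i j x) > 0))"

definition ginv :: "('n::finite \<Rightarrow> 'n \<Rightarrow> real^'n \<Rightarrow> real) \<Rightarrow> 'n \<Rightarrow> 'n \<Rightarrow> real^'n \<Rightarrow> real" where
  "ginv g i j x = matrix_inv (\<chi> a b. g a b x) $ i $ j"

text \<open>A linear connection, given by Christoffel symbols \<Gamma> a b c x = \<Gamma>^a_{bc}(x), i.e.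
  \<nabla>_b dx^a = - \<Gamma>^a_{bc} dx^c.\<close>
definition connection :: "(real^'n::finite) set \<Rightarrow> ('n \<Rightarrow> 'n \<Rightarrow> 'n \<Rightarrow> real^'n \<Rightarrow> real) \<Rightarrow> bool" where
  "connection U \<Gamma> = (\<forall>a b c. smooth_fun U (\<Gamma> a b c))"

text \<open>Component along dx^l of \<nabla>_k (dx^i).\<close>
definition nabla_dx :: "('n \<Rightarrow> 'n \<Rightarrow> 'n \<Rightarrow> real^'n \<Rightarrow> real) \<Rightarrow> 'n \<Rightarrow> 'n \<Rightarrow> 'n \<Rightarrow> real^'n \<Rightarrow> real" where
  "nabla_dx \<Gamma> k i l x = - \<Gamma> i k l x"

definition metric_compatible :: "(real^'n::finite) set \<Rightarrow> ('n \<Rightarrow> 'n \<Rightarrow> real^'n \<Rightarrow> real)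
    \<Rightarrow> ('n \<Rightarrow> 'n \<Rightarrow> 'n \<Rightarrow> real^'n \<Rightarrow> real) \<Rightarrow> bool" where
  "metric_compatible U g \<Gamma> =
     (\<forall>x\<in>U. \<forall>k i j. pd k (g i j) x - (\<Sum>m\<in>UNIV. \<Gamma> m k i x * g m j x)
                                   - (\<Sum>m\<in>UNIV. \<Gamma> m k j x * g i m x) = 0)"

definition torsion_free :: "(real^'n::finite) set \<Rightarrow> ('n \<Rightarrow> 'n \<Rightarrow> 'n \<Rightarrow> real^'n \<Rightarrow> real) \<Rightarrow> bool" where
  "torsion_free U \<Gamma> = (\<forall>x\<in>U. \<forall>a b c. \<Gamma> a b c x = \<Gamma> a c b x)"

definition levi_civita :: "(real^'n::finite) set \<Rightarrow> ('n \<Rightarrow> 'n \<Rightarrow> real^'n \<Rightarrow> real)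
    \<Rightarrow> ('n \<Rightarrow> 'n \<Rightarrow> 'n \<Rightarrow> real^'n \<Rightarrow> real) \<Rightarrow> bool" where
  "levi_civita U g \<Gamma> = (connection U \<Gamma> \<and> torsion_free U \<Gamma> \<and> metric_compatible U g \<Gamma>)"

text \<open>S defined by \<nabla>hat = \<nabla> + S, i.e. \<Gamma>hat^a_{bc} = \<Gamma>^a_{bc} - S^a_{bc}.\<close>
definition Sdiff :: "('n \<Rightarrow> 'n \<Rightarrow> 'n \<Rightarrow> real^'n \<Rightarrow> real) \<Rightarrow> ('n \<Rightarrow> 'n \<Rightarrow> 'n \<Rightarrow> real^'n \<Rightarrow> real)
    \<Rightarrow> 'n \<Rightarrow> 'n \<Rightarrow> 'n \<Rightarrow> real^'n \<Rightarrow> real" where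
  "Sdiff \<Gamma> \<Gamma>h a b c x = \<Gamma> a b c x - \<Gamma>h a b c x"

definition bivector :: "(real^'n::finite) set \<Rightarrow> ('n \<Rightarrow> 'n \<Rightarrow> real^'n \<Rightarrow> real) \<Rightarrow> bool" where
  "bivector U \<omega> = ((\<forall>i j. smooth_fun U (\<omega> i j)) \<and> (\<forall>x\<in>U. \<forall>i j. \<omega> i j x = - \<omega> j i x))"

definition cov_biv :: "('n::finite \<Rightarrow> 'n \<Rightarrow> 'n \<Rightarrow> real^'n \<Rightarrow> real) \<Rightarrow> ('n \<Rightarrow> 'n \<Rightarrow> real^'n \<Rightarrow> real)
    \<Rightarrow> 'n \<Rightarrow> 'n \<Rightarrow> 'n \<Rightarrow> real^'n \<Rightarrow> real" where
  "cov_biv \<Gamma> \<omega> k i j x = pd k (\<omega> i j) x + (\<Sum>m\<in>UNIV. \<Gamma> i k m x * \<omega> m j x)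
                                        + (\<Sum>m\<in>UNIV. \<Gamma> j k m x * \<omega> i m x)"

text \<open>(\<omega>,\<nabla>) Poisson-compatible: d(\<omega>^{ij}) - \<omega>^{kj} \<nabla>_k(dx^i) - \<omega>^{ik} \<nabla>_k(dx^j) = 0,
  componentwise along dx^l.\<close>
definition poisson_compatible :: "(real^'n::finite) set \<Rightarrow> ('n \<Rightarrow> 'n \<Rightarrow> real^'n \<Rightarrow> real)
    \<Rightarrow> ('n \<Rightarrow> 'n \<Rightarrow> 'n \<Rightarrow> real^'n \<Rightarrow> real) \<Rightarrow> bool" where
  "poisson_compatible U \<omega> \<Gamma> =
     (\<forall>x\<in>U. \<forall>i j l. pd l (\<omega> i j) x - (\<Sum>k\<in>UNIV. \<omega> k j x * nabla_dx \<Gamma> k i l x)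
                                   - (\<Sum>k\<in>UNIV. \<omega> i k x * nabla_dx \<Gamma> k j l x) = 0)"

end

theory Submission
  imports Defs
begin

abbreviation (input) dl :: "'n \<Rightarrow> 'n \<Rightarrow> real" where "dl a b \<equiv> (if a = b then 1 else 0)"

lemma swap3a: "(\<Sum>r\<in>A. \<Sum>m\<in>B. \<Sum>q\<in>C. f r m q) = (\<Sum>q\<in>C. \<Sum>r\<in>A. \<Sum>m\<in>B. (f r m q::real))"
proof -
  have "(\<Sum>r\<in>A. \<Sum>m\<in>B. \<Sum>q\<in>C. f r m q) = (\<Sum>r\<in>A. \<Sum>q\<in>C. \<Sum>m\<in>B. f r m q)"
    by (rule sum.cong, simp, rule sum.swap)
  also have "\<dots> = (\<Sum>q\<in>C. \<Sum>r\<in>A. \<Sum>m\<in>B. f r m q)" by (rule sum.swap)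
  finally show ?thesis .
qed

lemma swap3b: "(\<Sum>r\<in>A. \<Sum>m\<in>B. \<Sum>q\<in>C. f r m q) = (\<Sum>q\<in>C. \<Sum>m\<in>B. \<Sum>r\<in>A. (f r m q::real))"
proof -
  have "(\<Sum>r\<in>A. \<Sum>m\<in>B. \<Sum>q\<in>C. f r m q) = (\<Sum>m\<in>B. \<Sum>r\<in>A. \<Sum>q\<in>C. f r m q)"
    by (rule sum.swap)
  also have "\<dots> = (\<Sum>m\<in>B. \<Sum>q\<in>C. \<Sum>r\<in>A. f r m q)" by (rule sum.cong, simp, rule sum.swap)
  also have "\<dots> = (\<Sum>q\<in>C. \<Sum>m\<in>B. \<Sum>r\<in>A. f r m q)" by (rule sum.swap)
  finally show ?thesis .
qed

lemma core:
  fixes w :: "'n::finite \<Rightarrow> 'n \<Rightarrow> real" and S C :: "'n \<Rightarrow> 'n \<Rightarrow> 'n \<Rightarrow> real"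
    and G H :: "'n \<Rightarrow> 'n \<Rightarrow> real"
  assumes wa: "\<And>a b. w a b = - w b a"
    and GS: "\<And>a m c. (\<Sum>p\<in>UNIV. G a p * S p m c) = - (\<Sum>p\<in>UNIV. G c p * S p m a)"
    and Gsym: "\<And>a b. G a b = G b a"
    and GH: "\<And>p i. (\<Sum>r\<in>UNIV. G p r * H r i) = dl p i"
    and HG: "\<And>p i. (\<Sum>r\<in>UNIV. H p r * G r i) = dl p i"
    and Ca: "\<And>k i j. C k j i = - C k i j"
  shows "(\<forall>i j k. C k i j + (\<Sum>r\<in>UNIV. w i r * S j r k) - (\<Sum>r\<in>UNIV. w j r * S i r k) = 0)
     \<longleftrightarrow> (\<forall>i j k. (\<Sum>m\<in>UNIV. w j m * S i m k) = 1/2 * (C k i j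
           - (\<Sum>r\<in>UNIV. \<Sum>m\<in>UNIV. C r m j * H r i * G m k)
           + (\<Sum>r\<in>UNIV. \<Sum>m\<in>UNIV. C r i m * H r j * G m k)))"
proof -
  have ifm: "\<And>P (y::real). (if P then 1 else 0) * y = (if P then y else 0)" "\<And>P (y::real). y * (if P then 1 else 0) = (if P then y else 0)" by simp_all
  have coll: "\<And>f i. (\<Sum>r\<in>UNIV. H i r * (\<Sum>b\<in>UNIV. G r b * f b)) = f i"
  proof -
    fix f :: "'n \<Rightarrow> real" and i
    have "(\<Sum>r\<in>UNIV. H i r * (\<Sum>b\<in>UNIV. G r b * f b)) = (\<Sum>r\<in>UNIV. \<Sum>b\<in>UNIV. H i r * G r b * f b)"
      by (simp add: sum_distrib_left mult.assoc)
    also have "\<dots> = (\<Sum>b\<in>UNIV. \<Sum>r\<in>UNIV. H i r * G r b * f b)" by (rule sum.swap)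
    also have "\<dots> = (\<Sum>b\<in>UNIV. (\<Sum>r\<in>UNIV. H i r * G r b) * f b)" by (simp add: sum_distrib_right)
    also have "\<dots> = f i" by (simp add: HG ifm)
    finally show "?thesis f i" .
  qed
  have Hsym: "\<And>a b. H a b = H b a"
  proof -
    fix a b
    have "H b a = (\<Sum>r\<in>UNIV. H r a * dl r b)" by (simp add: ifm)
    also have "\<dots> = (\<Sum>r\<in>UNIV. H r a * (\<Sum>s\<in>UNIV. G r s * H s b))" by (simp add: GH)
    also have "\<dots> = (\<Sum>r\<in>UNIV. \<Sum>s\<in>UNIV. H r a * G r s * H s b)" by (simp add: sum_distrib_left mult.assoc)
    also have "\<dots> = (\<Sum>s\<in>UNIV. \<Sum>r\<in>UNIV. H r a * G r s * H s b)" by (rule sum.swap)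
    also have "\<dots> = (\<Sum>s\<in>UNIV. (\<Sum>r\<in>UNIV. G s r * H r a) * H s b)"
      by (simp add: sum_distrib_left sum_distrib_right Gsym mult.commute mult.left_commute)
    also have "\<dots> = H a b" by (simp add: GH ifm)
    finally show "H a b = H b a" by simp
  qed
  have coll2: "\<And>f i. (\<Sum>r\<in>UNIV. H r i * (\<Sum>b\<in>UNIV. G r b * f b)) = f i"
  proof -
    fix f :: "'n \<Rightarrow> real" and i
    have "(\<Sum>r\<in>UNIV. H r i * (\<Sum>b\<in>UNIV. G r b * f b)) = (\<Sum>r\<in>UNIV. H i r * (\<Sum>b\<in>UNIV. G r b * f b))"
      by (rule sum.cong, simp, metis Hsym)
    thus "?thesis f i" using coll by simp
  qed
  have L3: "\<And>j q i. (\<Sum>r\<in>UNIV. S j q r * H r i) = - (\<Sum>r\<in>UNIV. S i q r * H r j)"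
  proof -
    fix j q i
    define Y where "Y a r = (\<Sum>b\<in>UNIV. G a b * S b q r)" for a r
    have "(\<Sum>r\<in>UNIV. S j q r * H r i) = (\<Sum>r\<in>UNIV. (\<Sum>a\<in>UNIV. H j a * Y a r) * H r i)"
      unfolding Y_def by (simp add: coll)
    also have "\<dots> = (\<Sum>r\<in>UNIV. H i r * (\<Sum>a\<in>UNIV. H j a * Y a r))"
      by (rule sum.cong, simp, metis Hsym mult.commute)
    also have "\<dots> = (\<Sum>r\<in>UNIV. \<Sum>a\<in>UNIV. H j a * (H i r * Y a r))"
      by (simp add: sum_distrib_left mult.left_commute)
    also have "\<dots> = (\<Sum>a\<in>UNIV. \<Sum>r\<in>UNIV. H j a * (H i r * Y a r))" by (rule sum.swap)
    also have "\<dots> = (\<Sum>a\<in>UNIV. H j a * (\<Sum>r\<in>UNIV. H i r * Y a r))"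
      by (simp add: sum_distrib_left)
    also have "\<dots> = (\<Sum>a\<in>UNIV. H j a * (\<Sum>r\<in>UNIV. H i r * (- (\<Sum>b\<in>UNIV. G r b * S b q a))))"
    proof -
      have Yr: "\<And>a r. Y a r = - (\<Sum>b\<in>UNIV. G r b * S b q a)" unfolding Y_def by (rule GS)
      show ?thesis by (simp only: Yr)
    qed
    also have "\<dots> = - (\<Sum>a\<in>UNIV. H j a * S i q a)"
      by (simp only: coll sum_negf mult_minus_right)
    also have "\<dots> = - (\<Sum>r\<in>UNIV. S i q r * H r j)"
      by (rule arg_cong[where f=uminus], rule sum.cong, simp, metis Hsym mult.commute)
    finally show "?thesis j q i" .
  qed
  have GS': "\<And>a m c. (\<Sum>p\<in>UNIV. G p a * S p m c) = - (\<Sum>p\<in>UNIV. G p c * S p m a)"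
  proof -
    fix a m c
    have "(\<Sum>p\<in>UNIV. G p a * S p m c) = (\<Sum>p\<in>UNIV. G a p * S p m c)"
      by (rule sum.cong, simp, metis Gsym)
    moreover have "(\<Sum>p\<in>UNIV. G p c * S p m a) = (\<Sum>p\<in>UNIV. G c p * S p m a)"
      by (rule sum.cong, simp, metis Gsym)
    ultimately show "?thesis a m c" using GS[of a m c] by linarith
  qed
  have coll3: "\<And>f i. (\<Sum>r\<in>UNIV. H r i * (\<Sum>b\<in>UNIV. G b r * f b)) = f i"
  proof -
    fix f :: "'n \<Rightarrow> real" and i
    have "(\<Sum>r\<in>UNIV. H r i * (\<Sum>b\<in>UNIV. G b r * f b)) = (\<Sum>r\<in>UNIV. H r i * (\<Sum>b\<in>UNIV. G r b * f b))"
      by (rule sum.cong, simp, rule arg_cong[where f="\<lambda>z. _ * z"], rule sum.cong, simp, metis Gsym)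
    thus "?thesis f i" using coll2 by simp
  qed
  define A where "A i j k = (\<Sum>m\<in>UNIV. w j m * S i m k)" for i j k
  have L1: "\<And>i j k. (\<Sum>r\<in>UNIV. \<Sum>m\<in>UNIV. A m j r * H r i * G m k) = - A i j k"
  proof -
    fix i j k
    have "(\<Sum>r\<in>UNIV. \<Sum>m\<in>UNIV. A m j r * H r i * G m k)
        = (\<Sum>r\<in>UNIV. \<Sum>m\<in>UNIV. \<Sum>q\<in>UNIV. w j q * (H r i * (G m k * S m q r)))"
      by (simp add: A_def sum_distrib_left sum_distrib_right mult_ac)
    also have "\<dots> = (\<Sum>q\<in>UNIV. \<Sum>r\<in>UNIV. \<Sum>m\<in>UNIV. w j q * (H r i * (G m k * S m q r)))"
      by (rule swap3a)
    also have "\<dots> = (\<Sum>q\<in>UNIV. w j q * (\<Sum>r\<in>UNIV. H r i * (\<Sum>m\<in>UNIV. G m k * S m q r)))"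
      by (simp add: sum_distrib_left)
    also have "\<dots> = (\<Sum>q\<in>UNIV. w j q * (\<Sum>r\<in>UNIV. H r i * (- (\<Sum>m\<in>UNIV. G m r * S m q k))))"
      by (simp only: GS'[of k])
    also have "\<dots> = - A i j k"
      by (simp only: coll3 sum_negf mult_minus_right A_def)
    finally show "?thesis i j k" .
  qed
  have L2: "\<And>i j k. (\<Sum>r\<in>UNIV. \<Sum>m\<in>UNIV. A j m r * H r i * G m k)
      = (\<Sum>q\<in>UNIV. (\<Sum>m\<in>UNIV. w m q * G m k) * (\<Sum>r\<in>UNIV. S j q r * H r i))"
  proof -
    fix i j k
    have "(\<Sum>r\<in>UNIV. \<Sum>m\<in>UNIV. A j m r * H r i * G m k)
        = (\<Sum>r\<in>UNIV. \<Sum>m\<in>UNIV. \<Sum>q\<in>UNIV. (w m q * G m k) * (S j q r * H r i))"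
      by (simp add: A_def sum_distrib_left sum_distrib_right mult_ac)
    also have "\<dots> = (\<Sum>q\<in>UNIV. \<Sum>r\<in>UNIV. \<Sum>m\<in>UNIV. (w m q * G m k) * (S j q r * H r i))"
      by (rule swap3a)
    also have "\<dots> = (\<Sum>q\<in>UNIV. (\<Sum>m\<in>UNIV. w m q * G m k) * (\<Sum>r\<in>UNIV. S j q r * H r i))"
      by (simp add: sum_distrib_left sum_distrib_right)
    finally show "?thesis i j k" .
  qed
  define T2 where "T2 i j k = (\<Sum>r\<in>UNIV. \<Sum>m\<in>UNIV. C r m j * H r i * G m k)" for i j k
  have T3: "\<And>i j k. (\<Sum>r\<in>UNIV. \<Sum>m\<in>UNIV. C r i m * H r j * G m k) = - T2 j i k"
  proof -
    fix i j k
    have e: "\<And>r m. C r i m = - C r m i" by (rule Ca)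
    show "?thesis i j k" unfolding T2_def by (simp only: e mult_minus_left sum_negf)
  qed
  have Aw1: "\<And>i j k. (\<Sum>r\<in>UNIV. w i r * S j r k) = A j i k" by (simp add: A_def)
  have Aw2: "\<And>i j k. (\<Sum>r\<in>UNIV. w j r * S i r k) = A i j k" by (simp add: A_def)
  define Q where "Q j i k = (\<Sum>q\<in>UNIV. (\<Sum>m\<in>UNIV. w m q * G m k) * (\<Sum>r\<in>UNIV. S j q r * H r i))" for j i k
  have Qa: "\<And>i j k. Q i j k = - Q j i k"
  proof -
    fix i j k
    show "?thesis i j k" unfolding Q_def by (simp only: L3[of i _ j] mult_minus_right sum_negf)
  qed
  show ?thesis
  proof
    assume c1: "\<forall>i j k. C k i j + (\<Sum>r\<in>UNIV. w i r * S j r k) - (\<Sum>r\<in>UNIV. w j r * S i r k) = 0"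
    have Cd: "\<And>i j k. C k i j = A i j k - A j i k" proof -
      fix i j k
      have "C k i j + (\<Sum>r\<in>UNIV. w i r * S j r k) - (\<Sum>r\<in>UNIV. w j r * S i r k) = 0" using c1 by blast
      thus "?thesis i j k" unfolding Aw1 Aw2 by linarith
    qed
    have T2e: "\<And>i j k. T2 i j k = - A i j k - Q j i k"
    proof -
      fix i j k
      have "T2 i j k = (\<Sum>r\<in>UNIV. \<Sum>m\<in>UNIV. A m j r * H r i * G m k) - (\<Sum>r\<in>UNIV. \<Sum>m\<in>UNIV. A j m r * H r i * G m k)"
        unfolding T2_def Cd by (simp add: left_diff_distrib sum_subtractf)
      thus "?thesis i j k" using L1[where i=i and j=j and k=k] L2[where i=i and j=j and k=k] Q_def[of j i k] by linarith
    qed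
    show "\<forall>i j k. (\<Sum>m\<in>UNIV. w j m * S i m k) = 1/2 * (C k i j
           - (\<Sum>r\<in>UNIV. \<Sum>m\<in>UNIV. C r m j * H r i * G m k)
           + (\<Sum>r\<in>UNIV. \<Sum>m\<in>UNIV. C r i m * H r j * G m k))"
    proof (intro allI)
      fix i j k
      have "(\<Sum>m\<in>UNIV. w j m * S i m k) = A i j k" by (simp add: A_def)
      moreover have "(\<Sum>r\<in>UNIV. \<Sum>m\<in>UNIV. C r m j * H r i * G m k) = T2 i j k" by (simp add: T2_def)
      ultimately show "(\<Sum>m\<in>UNIV. w j m * S i m k) = 1/2 * (C k i j
           - (\<Sum>r\<in>UNIV. \<Sum>m\<in>UNIV. C r m j * H r i * G m k)
           + (\<Sum>r\<in>UNIV. \<Sum>m\<in>UNIV. C r i m * H r j * G m k))"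
        using T3[where i=i and j=j and k=k] T2e[where i=i and j=j and k=k] T2e[where i=j and j=i and k=k] Cd[where i=i and j=j and k=k] Qa[where i=i and j=j and k=k] by (simp add: field_simps)
    qed
  next
    assume f: "\<forall>i j k. (\<Sum>m\<in>UNIV. w j m * S i m k) = 1/2 * (C k i j
           - (\<Sum>r\<in>UNIV. \<Sum>m\<in>UNIV. C r m j * H r i * G m k)
           + (\<Sum>r\<in>UNIV. \<Sum>m\<in>UNIV. C r i m * H r j * G m k))"
    have fA: "\<And>i j k. A i j k = 1/2 * (C k i j - T2 i j k - T2 j i k)"
    proof -
      fix i j k
      have "(\<Sum>m\<in>UNIV. w j m * S i m k) = 1/2 * (C k i j
           - (\<Sum>r\<in>UNIV. \<Sum>m\<in>UNIV. C r m j * H r i * G m k)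
           + (\<Sum>r\<in>UNIV. \<Sum>m\<in>UNIV. C r i m * H r j * G m k))" using f by blast
      thus "?thesis i j k" unfolding T3 A_def[symmetric] T2_def[symmetric] by simp
    qed
    show "\<forall>i j k. C k i j + (\<Sum>r\<in>UNIV. w i r * S j r k) - (\<Sum>r\<in>UNIV. w j r * S i r k) = 0"
    proof (intro allI)
      fix i j k
      show "C k i j + (\<Sum>r\<in>UNIV. w i r * S j r k) - (\<Sum>r\<in>UNIV. w j r * S i r k) = 0"
        unfolding Aw1 Aw2 using fA[where i=i and j=j and k=k] fA[where i=j and j=i and k=k] Ca[where k=k and i=i and j=j] by (simp add: field_simps)
    qed
  qed
qed
lemma ginv_props:
  fixes g :: "'n::finite \<Rightarrow> 'n \<Rightarrow> real^'n \<Rightarrow> real"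
  assumes rm: "riemannian_metric U g" and x: "x \<in> U"
  shows "\<And>p i. (\<Sum>r\<in>UNIV. g p r x * ginv g r i x) = (if p = i then 1 else 0)"
    and "\<And>p i. (\<Sum>r\<in>UNIV. ginv g p r x * g r i x) = (if p = i then 1 else 0)"
proof -
  define G :: "real^'n^'n" where "G = (\<chi> a b. g a b x)"
  have pd: "\<And>v::real^'n. v \<noteq> 0 \<Longrightarrow> (\<Sum>i\<in>UNIV. \<Sum>j\<in>UNIV. v$i * v$j * g i j x) > 0"
    using rm x unfolding riemannian_metric_def by blast
  have ker: "\<forall>v. G *v v = 0 \<longrightarrow> v = 0"
  proof (intro allI impI)
    fix v :: "real^'n" assume "G *v v = 0"
    hence "\<And>i. (\<Sum>j\<in>UNIV. g i j x * v$j) = 0"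
      by (metis (no_types, lifting) G_def matrix_vector_mult_def vec_lambda_beta zero_index sum.cong)
    moreover have "(\<Sum>i\<in>UNIV. \<Sum>j\<in>UNIV. v$i * v$j * g i j x) = (\<Sum>i\<in>UNIV. v$i * (\<Sum>j\<in>UNIV. g i j x * v$j))"
      by (simp add: sum_distrib_left algebra_simps)
    ultimately have "(\<Sum>i\<in>UNIV. \<Sum>j\<in>UNIV. v$i * v$j * g i j x) = 0" by simp
    thus "v = 0" using pd by force
  qed
  hence "invertible G" using matrix_left_invertible_ker invertible_left_inverse by blast
  hence inv: "G ** matrix_inv G = mat 1 \<and> matrix_inv G ** G = mat 1"
    unfolding invertible_def matrix_inv_def by (rule someI_ex)
  have ginvG: "\<And>r i. ginv g r i x = matrix_inv G $ r $ i" by (simp add: ginv_def G_def)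
  show "\<And>p i. (\<Sum>r\<in>UNIV. g p r x * ginv g r i x) = (if p = i then 1 else 0)"
  proof -
    fix p i
    have "(G ** matrix_inv G) $ p $ i = (if p = i then 1 else 0)" using inv by (simp add: mat_def)
    thus "(\<Sum>r\<in>UNIV. g p r x * ginv g r i x) = (if p = i then 1 else 0)"
      by (simp add: matrix_matrix_mult_def G_def ginvG)
  qed
  show "\<And>p i. (\<Sum>r\<in>UNIV. ginv g p r x * g r i x) = (if p = i then 1 else 0)"
  proof -
    fix p i
    have "(matrix_inv G ** G) $ p $ i = (if p = i then 1 else 0)" using inv by (simp add: mat_def)
    thus "(\<Sum>r\<in>UNIV. ginv g p r x * g r i x) = (if p = i then 1 else 0)"
      by (simp add: matrix_matrix_mult_def G_def ginvG)
  qed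
qed

lemma smooth_diff_at:
  assumes "smooth_fun U f" "open U" "x \<in> U"
  shows "f differentiable at x"
proof -
  have "Ck (Suc 0) U f" using assms(1) unfolding smooth_fun_def by blast
  hence "f differentiable_on U" by simp
  thus ?thesis using assms(2,3) differentiable_on_eq_differentiable_at by blast
qed

lemma pd_antisym:
  assumes "open U" "x \<in> U" "smooth_fun U f" "smooth_fun U h" "\<And>y. y \<in> U \<Longrightarrow> h y = - f y"
  shows "pd k h x = - pd k f x"
proof -
  have df: "f differentiable at x" using smooth_diff_at assms by blast
  have dh: "h differentiable at x" using smooth_diff_at assms by blast
  have "frechet_derivative h (at x) = frechet_derivative (\<lambda>y. - f y) (at x)"
    by (rule frechet_derivative_transform_within_open[OF dh assms(1,2)]) (simp add: assms(5))
  moreover have "((\<lambda>y. - f y) has_derivative (\<lambda>v. - frechet_derivative f (at x) v)) (at x)"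
    using df frechet_derivative_works has_derivative_minus by blast
  ultimately have "frechet_derivative h (at x) = (\<lambda>v. - frechet_derivative f (at x) v)"
    using frechet_derivative_at by metis
  thus ?thesis unfolding pd_def by simp
qed

theorem proposition5p5:
  fixes U :: "(real^'n::finite) set"
    and g :: "'n \<Rightarrow> 'n \<Rightarrow> real^'n \<Rightarrow> real"
    and \<Gamma> \<Gamma>h :: "'n \<Rightarrow> 'n \<Rightarrow> 'n \<Rightarrow> real^'n \<Rightarrow> real"
    and \<omega> :: "'n \<Rightarrow> 'n \<Rightarrow> real^'n \<Rightarrow> real"
  assumes "open U"
    and "riemannian_metric U g"
    and "levi_civita U g \<Gamma>h"
    and "connection U \<Gamma>"
    and "metric_compatible U g \<Gamma>"
    and "bivector U \<omega>"
  shows "(poisson_compatible U \<omega> \<Gamma> \<longleftrightarrow>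
           (\<forall>x\<in>U. \<forall>i j k. cov_biv \<Gamma>h \<omega> k i j x
               + (\<Sum>r\<in>UNIV. \<omega> i r x * Sdiff \<Gamma> \<Gamma>h j r k x)
               - (\<Sum>r\<in>UNIV. \<omega> j r x * Sdiff \<Gamma> \<Gamma>h i r k x) = 0))
       \<and> (poisson_compatible U \<omega> \<Gamma> \<longleftrightarrow>
           (\<forall>x\<in>U. \<forall>i j k. (\<Sum>m\<in>UNIV. \<omega> j m x * Sdiff \<Gamma> \<Gamma>h i m k x)
               = 1/2 * (cov_biv \<Gamma>h \<omega> k i j x
                   - (\<Sum>r\<in>UNIV. \<Sum>m\<in>UNIV. cov_biv \<Gamma>h \<omega> r m j x * ginv g r i x * g m k x)
                   + (\<Sum>r\<in>UNIV. \<Sum>m\<in>UNIV. cov_biv \<Gamma>h \<omega> r i m x * ginv g r j x * g m k x))))"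
  proof -
  note rm = assms(2)
  have Gsym: "\<And>x a b. x \<in> U \<Longrightarrow> g a b x = g b a x" using rm unfolding riemannian_metric_def by blast
  have wa: "\<And>x a b. x \<in> U \<Longrightarrow> \<omega> a b x = - \<omega> b a x" using assms(6) unfolding bivector_def by blast
  have tf: "\<And>x a b c. x \<in> U \<Longrightarrow> \<Gamma>h a b c x = \<Gamma>h a c b x"
    using assms(3) unfolding levi_civita_def torsion_free_def by blast
  have mc1: "\<And>x k i j. x \<in> U \<Longrightarrow> pd k (g i j) x - (\<Sum>m\<in>UNIV. \<Gamma> m k i x * g m j x)
                                   - (\<Sum>m\<in>UNIV. \<Gamma> m k j x * g i m x) = 0"
    using assms(5) unfolding metric_compatible_def by blast
  have mc2: "\<And>x k i j. x \<in> U \<Longrightarrow> pd k (g i j) x - (\<Sum>m\<in>UNIV. \<Gamma>h m k i x * g m j x)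
                                   - (\<Sum>m\<in>UNIV. \<Gamma>h m k j x * g i m x) = 0"
    using assms(3) unfolding levi_civita_def metric_compatible_def by blast
  have P1: "\<And>x i j k. x \<in> U \<Longrightarrow>
      pd k (\<omega> i j) x - (\<Sum>m\<in>UNIV. \<omega> m j x * nabla_dx \<Gamma> m i k x) - (\<Sum>m\<in>UNIV. \<omega> i m x * nabla_dx \<Gamma> m j k x)
      = cov_biv \<Gamma>h \<omega> k i j x
               + (\<Sum>r\<in>UNIV. \<omega> i r x * Sdiff \<Gamma> \<Gamma>h j r k x)
               - (\<Sum>r\<in>UNIV. \<omega> j r x * Sdiff \<Gamma> \<Gamma>h i r k x)"
  proof -
    fix x i j k assume x: "x \<in> U"
    have e1: "(\<Sum>m\<in>UNIV. \<Gamma>h i k m x * \<omega> m j x) = (\<Sum>m\<in>UNIV. \<omega> m j x * \<Gamma>h i m k x)"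
      by (rule sum.cong, simp, metis tf x mult.commute)
    have e2: "(\<Sum>m\<in>UNIV. \<Gamma>h j k m x * \<omega> i m x) = (\<Sum>m\<in>UNIV. \<omega> i m x * \<Gamma>h j m k x)"
      by (rule sum.cong, simp, metis tf x mult.commute)
    have e3: "(\<Sum>r\<in>UNIV. \<omega> i r x * Sdiff \<Gamma> \<Gamma>h j r k x) = (\<Sum>r\<in>UNIV. \<omega> i r x * \<Gamma> j r k x) - (\<Sum>r\<in>UNIV. \<omega> i r x * \<Gamma>h j r k x)"
      by (simp add: Sdiff_def right_diff_distrib sum_subtractf)
    have e4: "(\<Sum>r\<in>UNIV. \<omega> j r x * Sdiff \<Gamma> \<Gamma>h i r k x) = (\<Sum>r\<in>UNIV. \<omega> r j x * \<Gamma>h i r k x) - (\<Sum>r\<in>UNIV. \<omega> r j x * \<Gamma> i r k x)"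
    proof -
      have "(\<Sum>r\<in>UNIV. \<omega> j r x * Sdiff \<Gamma> \<Gamma>h i r k x) = (\<Sum>r\<in>UNIV. \<omega> r j x * \<Gamma>h i r k x - \<omega> r j x * \<Gamma> i r k x)"
      proof (rule sum.cong)
        fix r assume "r \<in> (UNIV::'n set)"
        have "\<omega> j r x = - \<omega> r j x" using wa x by blast
        thus "\<omega> j r x * Sdiff \<Gamma> \<Gamma>h i r k x = \<omega> r j x * \<Gamma>h i r k x - \<omega> r j x * \<Gamma> i r k x"
          by (simp add: Sdiff_def algebra_simps)
      qed simp
      thus ?thesis by (simp add: sum_subtractf)
    qed
    have e5: "(\<Sum>m\<in>UNIV. \<omega> m j x * nabla_dx \<Gamma> m i k x) = - (\<Sum>m\<in>UNIV. \<omega> m j x * \<Gamma> i m k x)"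
      by (simp add: nabla_dx_def sum_negf)
    have e6: "(\<Sum>m\<in>UNIV. \<omega> i m x * nabla_dx \<Gamma> m j k x) = - (\<Sum>m\<in>UNIV. \<omega> i m x * \<Gamma> j m k x)"
      by (simp add: nabla_dx_def sum_negf)
    show "?thesis x i j k" unfolding cov_biv_def e1 e2 e3 e4 e5 e6 by linarith
  qed
  have PC: "poisson_compatible U \<omega> \<Gamma> \<longleftrightarrow>
           (\<forall>x\<in>U. \<forall>i j k. cov_biv \<Gamma>h \<omega> k i j x
               + (\<Sum>r\<in>UNIV. \<omega> i r x * Sdiff \<Gamma> \<Gamma>h j r k x)
               - (\<Sum>r\<in>UNIV. \<omega> j r x * Sdiff \<Gamma> \<Gamma>h i r k x) = 0)"
    unfolding poisson_compatible_def by (simp only: P1 cong: ball_cong)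
  have Cx: "\<And>x. x \<in> U \<Longrightarrow> (\<forall>i j k. cov_biv \<Gamma>h \<omega> k i j x
               + (\<Sum>r\<in>UNIV. \<omega> i r x * Sdiff \<Gamma> \<Gamma>h j r k x)
               - (\<Sum>r\<in>UNIV. \<omega> j r x * Sdiff \<Gamma> \<Gamma>h i r k x) = 0) \<longleftrightarrow>
           (\<forall>i j k. (\<Sum>m\<in>UNIV. \<omega> j m x * Sdiff \<Gamma> \<Gamma>h i m k x)
               = 1/2 * (cov_biv \<Gamma>h \<omega> k i j x
                   - (\<Sum>r\<in>UNIV. \<Sum>m\<in>UNIV. cov_biv \<Gamma>h \<omega> r m j x * ginv g r i x * g m k x)
                   + (\<Sum>r\<in>UNIV. \<Sum>m\<in>UNIV. cov_biv \<Gamma>h \<omega> r i m x * ginv g r j x * g m k x)))"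
  proof -
    fix x assume x: "x \<in> U"
    show "?thesis x"
    proof (rule core[where w="\<lambda>a b. \<omega> a b x" and S="\<lambda>a b c. Sdiff \<Gamma> \<Gamma>h a b c x"
          and G="\<lambda>a b. g a b x" and H="\<lambda>a b. ginv g a b x" and C="\<lambda>k i j. cov_biv \<Gamma>h \<omega> k i j x"])
      show "\<And>a b. \<omega> a b x = - \<omega> b a x" using wa x by blast
      show "\<And>a b. g a b x = g b a x" using Gsym x by blast
      show "\<And>p i. (\<Sum>r\<in>UNIV. g p r x * ginv g r i x) = dl p i" using ginv_props(1)[OF rm x] by blast
      show "\<And>p i. (\<Sum>r\<in>UNIV. ginv g p r x * g r i x) = dl p i" using ginv_props(2)[OF rm x] by blast
      show "\<And>a m c. (\<Sum>p\<in>UNIV. g a p x * Sdiff \<Gamma> \<Gamma>h p m c x) = - (\<Sum>p\<in>UNIV. g c p x * Sdiff \<Gamma> \<Gamma>h p m a x)"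
      proof -
        fix a m c
        have 1: "(\<Sum>p\<in>UNIV. g a p x * Sdiff \<Gamma> \<Gamma>h p m c x) = (\<Sum>p\<in>UNIV. \<Gamma> p m c x * g p a x) - (\<Sum>p\<in>UNIV. \<Gamma>h p m c x * g p a x)"
        proof -
          have "(\<Sum>p\<in>UNIV. g a p x * Sdiff \<Gamma> \<Gamma>h p m c x) = (\<Sum>p\<in>UNIV. \<Gamma> p m c x * g p a x - \<Gamma>h p m c x * g p a x)"
            by (rule sum.cong, simp, simp add: Sdiff_def Gsym[OF x, of a] algebra_simps)
          thus ?thesis by (simp add: sum_subtractf)
        qed
        have 2: "(\<Sum>p\<in>UNIV. g c p x * Sdiff \<Gamma> \<Gamma>h p m a x) = (\<Sum>p\<in>UNIV. \<Gamma> p m a x * g c p x) - (\<Sum>p\<in>UNIV. \<Gamma>h p m a x * g c p x)"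
          by (simp add: Sdiff_def algebra_simps sum_subtractf)
        show "?thesis a m c" using 1 2 mc1[OF x, of m c a] mc2[OF x, of m c a] by linarith
      qed
      show "\<And>k i j. cov_biv \<Gamma>h \<omega> k j i x = - cov_biv \<Gamma>h \<omega> k i j x"
      proof -
        fix k i j
        have sm: "\<And>a b. smooth_fun U (\<omega> a b)" using assms(6) unfolding bivector_def by blast
        have d: "pd k (\<omega> j i) x = - pd k (\<omega> i j) x"
          by (rule pd_antisym[OF assms(1) x sm sm]) (rule wa)
        have s1: "(\<Sum>m\<in>UNIV. \<Gamma>h j k m x * \<omega> m i x) = - (\<Sum>m\<in>UNIV. \<Gamma>h j k m x * \<omega> i m x)"
        proof -
          have "(\<Sum>m\<in>UNIV. \<Gamma>h j k m x * \<omega> m i x) = (\<Sum>m\<in>UNIV. - (\<Gamma>h j k m x * \<omega> i m x))"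
            by (rule sum.cong, simp, metis wa x mult_minus_right)
          thus ?thesis by (simp only: sum_negf)
        qed
        have s2: "(\<Sum>m\<in>UNIV. \<Gamma>h i k m x * \<omega> j m x) = - (\<Sum>m\<in>UNIV. \<Gamma>h i k m x * \<omega> m j x)"
        proof -
          have "(\<Sum>m\<in>UNIV. \<Gamma>h i k m x * \<omega> j m x) = (\<Sum>m\<in>UNIV. - (\<Gamma>h i k m x * \<omega> m j x))"
            by (rule sum.cong, simp, metis wa x mult_minus_right)
          thus ?thesis by (simp only: sum_negf)
        qed
        show "?thesis k i j" unfolding cov_biv_def d s1 s2 by linarith
      qed
    qed
  qed
  have B: "(\<forall>x\<in>U. \<forall>i j k. cov_biv \<Gamma>h \<omega> k i j x
               + (\<Sum>r\<in>UNIV. \<omega> i r x * Sdiff \<Gamma> \<Gamma>h j r k x)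
               - (\<Sum>r\<in>UNIV. \<omega> j r x * Sdiff \<Gamma> \<Gamma>h i r k x) = 0) \<longleftrightarrow>
           (\<forall>x\<in>U. \<forall>i j k. (\<Sum>m\<in>UNIV. \<omega> j m x * Sdiff \<Gamma> \<Gamma>h i m k x)
               = 1/2 * (cov_biv \<Gamma>h \<omega> k i j x
                   - (\<Sum>r\<in>UNIV. \<Sum>m\<in>UNIV. cov_biv \<Gamma>h \<omega> r m j x * ginv g r i x * g m k x)
                   + (\<Sum>r\<in>UNIV. \<Sum>m\<in>UNIV. cov_biv \<Gamma>h \<omega> r i m x * ginv g r j x * g m k x)))"
    by (rule ball_cong[OF refl], rule Cx)
  show ?thesis by (rule conjI[OF PC trans[OF PC B]])
qed

end
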